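(* Let $r\in\mathbb{N}_0$ and $n\ge0$. The expected number $E_{n;r}$ of $r$-branches in a binary tree chosen uniformly at random among binary trees with $n$ inner nodes is \[ E_{n;r}=\frac{n+1}{\binom{2n}{n}}\sum_{\lambda\ge1}\lambda\bigg[\binom{2n}{n+1-\lambda2^r}-2\binom{2n}{n-\lambda2^r}+\binom{2n}{n-1-\lambda2^r}\bigg], \] where binomial coefficients with negative lower index are $0$.
   Context: A binary tree is either a leaf $\square$ or an inner node with an ordered pair of subtrees (left, right) which are binary trees; its size is its number of inner nodes. The register function is defined by $\mathrm{Reg}(\square)=0$, and for a tree with subtrees $t_1,t_2$: $\mathrm{Reg}(t)=\max\{\mathrm{Reg}(t_1),\mathrm{Reg}(t_2)\}$ if these differ, and $\mathrm{Reg}(t_1)+1$ otherwise. Label every node (inner node or leaf) by the register function of the subtree rooted at it. An $r$-branch is a maximal chain of nodes labeled $r$, i.e. a connected component (with respect to parent–child edges) of the set of nodes labeled $r$. *)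

theory Defs
  imports Complex_Main
begin

datatype bt = Leaf | Node bt bt

fun inner :: "bt \<Rightarrow> nat" where
  "inner Leaf = 0"
| "inner (Node l r) = inner l + inner r + 1"

fun reg :: "bt \<Rightarrow> nat" where
  "reg Leaf = 0"
| "reg (Node t1 t2) = (if reg t1 \<noteq> reg t2 then max (reg t1) (reg t2) else reg t1 + 1)"

text \<open>Nodes (inner nodes and leaves) are addressed by their path from the root
  (False = go left, True = go right).\<close>
fun subtree_at :: "bt \<Rightarrow> bool list \<Rightarrow> bt option" where
  "subtree_at t [] = Some t"
| "subtree_at Leaf (_ # _) = None"
| "subtree_at (Node l r) (b # p) = subtree_at (if b then r else l) p"

definition nodes :: "bt \<Rightarrow> bool list set" where
  "nodes t = {p. subtree_at t p \<noteq> None}"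

definition label :: "bt \<Rightarrow> bool list \<Rightarrow> nat" where
  "label t p = reg (the (subtree_at t p))"

definition rnodes :: "bt \<Rightarrow> nat \<Rightarrow> bool list set" where
  "rnodes t r = {p \<in> nodes t. label t p = r}"

definition branch_edge :: "bt \<Rightarrow> nat \<Rightarrow> (bool list \<times> bool list) set" where
  "branch_edge t r = {(p, q). p \<in> rnodes t r \<and> q \<in> rnodes t r \<and>
                         (\<exists>b. q = p @ [b] \<or> p = q @ [b])}"

text \<open>r-branches: connected components of the set of nodes labelled r.\<close>
definition branches :: "bt \<Rightarrow> nat \<Rightarrow> bool list set set" where
  "branches t r = rnodes t r // ((branch_edge t r)\<^sup>*)"

definition num_branches :: "bt \<Rightarrow> nat \<Rightarrow> nat" where
  "num_branches t r = card (branches t r)"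

definition trees_of_size :: "nat \<Rightarrow> bt set" where
  "trees_of_size n = {t. inner t = n}"

definition expected_branches :: "nat \<Rightarrow> nat \<Rightarrow> real" where
  "expected_branches n r =
     (\<Sum>t\<in>trees_of_size n. real (num_branches t r)) / real (card (trees_of_size n))"

definition binomi :: "nat \<Rightarrow> int \<Rightarrow> int" where
  "binomi m k = (if k < 0 then 0 else int (m choose nat k))"

end

theory Submission
  imports Defs "HOL-Computational_Algebra.Formal_Power_Series"
begin
unbundle fps_syntax

definition T :: "nat \<Rightarrow> bt set" where "T n = {t. inner t = n}"

lemma T0: "T 0 = {Leaf}"
  unfolding T_def by (auto elim: inner.elims)

lemma T_Suc: "T (Suc n) = (\<lambda>(a,b). Node a b) ` (\<Union>i\<in>{..n}. T i \<times> T (n-i))"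
proof
  show "T (Suc n) \<subseteq> (\<lambda>(a,b). Node a b) ` (\<Union>i\<in>{..n}. T i \<times> T (n-i))"
  proof
    fix t assume "t \<in> T (Suc n)"
    then obtain a b where t: "t = Node a b" and s: "inner a + inner b = n"
      unfolding T_def by (cases t) auto
    then have "(a,b) \<in> T (inner a) \<times> T (n - inner a)" "inner a \<in> {..n}" by (auto simp: T_def)
    then show "t \<in> (\<lambda>(a,b). Node a b) ` (\<Union>i\<in>{..n}. T i \<times> T (n-i))" using t by force
  qed
qed (auto simp: T_def)

lemma finite_T: "finite (T n)"
proof (induction n rule: less_induct)
  case (less n)
  show ?case
  proof (cases n)
    case 0 then show ?thesis by (simp add: T0)
  next
    case (Suc m)
    have "finite (\<Union>i\<in>{..m}. T i \<times> T (m-i))"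
      using less Suc by (intro finite_UN_I) auto
    then show ?thesis unfolding Suc T_Suc by blast
  qed
qed

lemma sum_T_Suc: "(\<Sum>t\<in>T (Suc n). w t) = (\<Sum>i\<le>n. \<Sum>a\<in>T i. \<Sum>b\<in>T (n-i). w (Node a b))"
proof -
  have inj: "inj_on (\<lambda>(a,b). Node a b) X" for X by (auto simp: inj_on_def)
  have "(\<Sum>t\<in>T (Suc n). w t) = (\<Sum>p\<in>(\<Union>i\<in>{..n}. T i \<times> T (n-i)). w (case p of (a,b) \<Rightarrow> Node a b))"
    unfolding T_Suc by (subst sum.reindex[OF inj]) (simp add: comp_def)
  also have "\<dots> = (\<Sum>i\<le>n. \<Sum>p\<in>T i \<times> T (n-i). w (case p of (a,b) \<Rightarrow> Node a b))"
    by (rule sum.UNION_disjoint) (auto simp: finite_T, auto simp: T_def)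
  also have "\<dots> = (\<Sum>i\<le>n. \<Sum>a\<in>T i. \<Sum>b\<in>T (n-i). w (Node a b))"
    by (simp add: sum.cartesian_product split_def)
  finally show ?thesis .
qed

definition gf :: "(bt \<Rightarrow> int) \<Rightarrow> int fps" where
  "gf w = Abs_fps (\<lambda>n. \<Sum>t\<in>T n. w t)"

lemma gf_mult_nth: "(gf f * gf g) $ m = (\<Sum>i\<le>m. \<Sum>a\<in>T i. \<Sum>b\<in>T (m-i). f a * g b)"
  by (simp add: fps_mult_nth gf_def sum_product atLeast0AtMost)

lemma gf_node:
  assumes "\<And>a b. w (Node a b) = f1 a * g1 b + f2 a * g2 b + f3 a * g3 b" and "w Leaf = c"
  shows "gf w = fps_const c + fps_X * (gf f1 * gf g1 + gf f2 * gf g2 + gf f3 * gf g3)"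
proof (rule fps_ext)
  fix n show "gf w $ n = (fps_const c + fps_X * (gf f1 * gf g1 + gf f2 * gf g2 + gf f3 * gf g3)) $ n"
  proof (cases n)
    case 0 then show ?thesis using assms(2) by (simp add: gf_def T0)
  next
    case (Suc m)
    then show ?thesis
      by (simp add: gf_def sum_T_Suc assms sum.distrib gf_mult_nth[unfolded gf_def])
  qed
qed

lemma gf_add: "gf (\<lambda>t. f t + g t) = gf f + gf g"
  by (simp add: gf_def sum.distrib fps_eq_iff)

lemma gf_zero: "gf (\<lambda>t. 0) = 0"
  by (simp add: gf_def fps_eq_iff)


definition tops :: "bt \<Rightarrow> nat \<Rightarrow> bool list set" where
  "tops t r = {p \<in> rnodes t r. p = [] \<or> butlast p \<notin> rnodes t r}"

function up :: "bool list set \<Rightarrow> bool list \<Rightarrow> bool list" where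
  "up S p = (if p \<noteq> [] \<and> butlast p \<in> S then up S (butlast p) else p)"
  by auto
termination by (relation "measure (\<lambda>(S,p). length p)") auto

declare up.simps[simp del]

lemma up_top: "p \<in> S \<Longrightarrow> up S p \<in> S \<and> (up S p = [] \<or> butlast (up S p) \<notin> S)"
proof (induction S p rule: up.induct)
  case (1 S p)
  show ?case
  proof (cases "p \<noteq> [] \<and> butlast p \<in> S")
    case True then have "up S p = up S (butlast p)" by (subst up.simps) simp
    with 1 True show ?thesis by simp
  next
    case False then have "up S p = p" by (subst up.simps) (rule if_not_P)
    with 1 False show ?thesis by auto
  qed
qed

lemma up_fix: "p = [] \<or> butlast p \<notin> S \<Longrightarrow> up S p = p"
  by (subst up.simps, rule if_not_P) auto

lemma up_path: "p \<in> rnodes t r \<Longrightarrow> (p, up (rnodes t r) p) \<in> (branch_edge t r)\<^sup>*"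
proof (induction "rnodes t r" p rule: up.induct)
  case (1 p)
  show ?case
  proof (cases "p \<noteq> [] \<and> butlast p \<in> rnodes t r")
    case True
    then have "(p, butlast p) \<in> branch_edge t r"
      using 1(2) unfolding branch_edge_def
      by (auto intro!: exI[of _ "last p"] simp: append_butlast_last_id)
    moreover have "(butlast p, up (rnodes t r) (butlast p)) \<in> (branch_edge t r)\<^sup>*"
      using 1 True by blast
    ultimately show ?thesis using True
      by (subst up.simps) (auto intro: converse_rtrancl_into_rtrancl)
  next
    case False then show ?thesis by (subst up.simps) auto
  qed
qed

lemma up_snoc: "p \<in> S \<Longrightarrow> up S (p @ [b]) = up S p"
  by (subst up.simps) simp

lemma up_edge: "(p, q) \<in> branch_edge t r \<Longrightarrow> up (rnodes t r) p = up (rnodes t r) q"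
  unfolding branch_edge_def by (auto simp: up_snoc)

lemma up_rtrancl: "(p, q) \<in> (branch_edge t r)\<^sup>* \<Longrightarrow> up (rnodes t r) p = up (rnodes t r) q"
  by (induction rule: rtrancl_induct) (auto dest: up_edge)

lemma edge_sym: "(p, q) \<in> branch_edge t r \<Longrightarrow> (q, p) \<in> branch_edge t r"
  unfolding branch_edge_def by auto

lemma rtrancl_sym: "(p, q) \<in> (branch_edge t r)\<^sup>* \<Longrightarrow> (q, p) \<in> (branch_edge t r)\<^sup>*"
  by (induction rule: rtrancl_induct) (auto dest: edge_sym intro: converse_rtrancl_into_rtrancl)

lemma num_branches_tops: "num_branches t r = card (tops t r)"
proof -
  let ?E = "(branch_edge t r)\<^sup>*"
  let ?S = "rnodes t r"
  have "bij_betw (\<lambda>q. ?E `` {q}) (tops t r) (branches t r)"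
  proof (rule bij_betw_imageI)
    show "inj_on (\<lambda>q. ?E `` {q}) (tops t r)"
    proof (rule inj_onI)
      fix q1 q2 assume q: "q1 \<in> tops t r" "q2 \<in> tops t r" "?E `` {q1} = ?E `` {q2}"
      then have "(q1, q2) \<in> ?E" by blast
      then have "up ?S q1 = up ?S q2" by (rule up_rtrancl)
      then show "q1 = q2" using q(1,2) up_fix unfolding tops_def by fastforce
    qed
    show "(\<lambda>q. ?E `` {q}) ` tops t r = branches t r"
    proof
      show "(\<lambda>q. ?E `` {q}) ` tops t r \<subseteq> branches t r"
        unfolding branches_def tops_def by (auto intro: quotientI)
      show "branches t r \<subseteq> (\<lambda>q. ?E `` {q}) ` tops t r"
      proof
        fix X assume "X \<in> branches t r"
        then obtain p where p: "p \<in> ?S" "X = ?E `` {p}" unfolding branches_def quotient_def by blast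
        let ?q = "up ?S p"
        have qt: "?q \<in> tops t r" using up_top[OF p(1)] unfolding tops_def by auto
        have pq: "(p, ?q) \<in> ?E" using up_path[OF p(1)] .
        then have qp: "(?q, p) \<in> ?E" by (rule rtrancl_sym)
        have "?E `` {p} = ?E `` {?q}"
          using pq qp by (auto intro: rtrancl_trans)
        then show "X \<in> (\<lambda>q. ?E `` {q}) ` tops t r" using p qt by blast
      qed
    qed
  qed
  then show ?thesis unfolding num_branches_def by (simp add: bij_betw_same_card)
qed

lemma nodes_Leaf: "nodes Leaf = {[]}"
  unfolding nodes_def by (auto elim: subtree_at.elims)

lemma nodes_Node: "nodes (Node a b) = insert [] (Cons False ` nodes a \<union> Cons True ` nodes b)"
proof -
  have "p \<in> nodes (Node a b) \<longleftrightarrow> p \<in> insert [] (Cons False ` nodes a \<union> Cons True ` nodes b)" for p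
    unfolding nodes_def by (cases p) auto
  then show ?thesis by blast
qed

lemma finite_nodes: "finite (nodes t)"
  by (induction t) (auto simp: nodes_Leaf nodes_Node)

lemma rnodes_Nil: "[] \<in> rnodes t r \<longleftrightarrow> reg t = r"
  unfolding rnodes_def nodes_def label_def by auto

lemma rnodes_Cons: "x # p \<in> rnodes (Node a b) r \<longleftrightarrow> p \<in> rnodes (if x then b else a) r"
  unfolding rnodes_def nodes_def label_def by auto

lemma tops_Nil: "[] \<in> tops t r \<longleftrightarrow> reg t = r"
  unfolding tops_def by (simp add: rnodes_Nil)

lemma tops_Cons: "x # p \<in> tops (Node a b) r \<longleftrightarrow>
    p \<in> tops (if x then b else a) r \<and> \<not> (p = [] \<and> reg (Node a b) = r)"
  unfolding tops_def
  by (cases p) (auto simp: rnodes_Cons rnodes_Nil simp del: reg.simps)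

lemma tops_Node: "tops (Node a b) r = {p. p = [] \<and> reg (Node a b) = r}
   \<union> Cons False ` (tops a r - {p. p = [] \<and> reg (Node a b) = r})
   \<union> Cons True ` (tops b r - {p. p = [] \<and> reg (Node a b) = r})" (is "_ = ?R")
proof -
  have "p \<in> tops (Node a b) r \<longleftrightarrow> p \<in> ?R" for p
  proof (cases p)
    case Nil then show ?thesis by (auto simp: tops_Nil simp del: reg.simps)
  next
    case (Cons x q) then show ?thesis by (cases x) (auto simp: tops_Cons simp del: reg.simps)
  qed
  then show ?thesis by blast
qed

lemma finite_tops: "finite (tops t r)"
  using finite_nodes[of t] unfolding tops_def rnodes_def by auto

fun nbot :: "nat \<Rightarrow> bt \<Rightarrow> nat" where
  "nbot r Leaf = (if r = 0 then 1 else 0)"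
| "nbot r (Node a b) = nbot r a + nbot r b + (if reg a = reg b \<and> Suc (reg a) = r then 1 else 0)"

lemma card_tops: "card (tops t r) = nbot r t"
proof (induction t)
  case Leaf
  have "tops Leaf r = (if r = 0 then {[]} else {})"
    unfolding tops_def rnodes_def nodes_Leaf label_def by auto
  then show ?case by simp
next
  case (Node a b)
  let ?Z = "{p::bool list. p = [] \<and> reg (Node a b) = r}"
  have fin: "finite ?Z" by (rule finite_subset[of _ "{[]}"]) auto
  have cZ: "card ?Z = (if reg (Node a b) = r then 1 else 0)"
    by (cases "reg (Node a b) = r") auto
  have cD: "card (tops c r - ?Z) = card (tops c r) - (if reg (Node a b) = r \<and> reg c = r then 1 else 0)" for c
  proof -
    have "tops c r \<inter> ?Z = (if reg (Node a b) = r \<and> reg c = r then {[]} else {})"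
      using tops_Nil[of c r] by (auto simp del: reg.simps)
    then show ?thesis using card_Diff_subset_Int[of "tops c r" ?Z] fin by (simp del: reg.simps)
  qed
  have ge: "card (tops c r) \<ge> (if reg c = r then 1 else 0)" for c
  proof (cases "reg c = r")
    case True
    then have "[] \<in> tops c r" using tops_Nil by blast
    then have "card (tops c r) > 0" using finite_tops card_gt_0_iff by blast
    then show ?thesis by simp
  qed simp
  have "card (tops (Node a b) r) = card ?Z + card (tops a r - ?Z) + card (tops b r - ?Z)"
  proof -
    let ?F = "Cons False ` (tops a r - ?Z)" and ?G = "Cons True ` (tops b r - ?Z)"
    have fF: "finite ?F" and fG: "finite ?G" using finite_tops by auto
    have d1: "?Z \<inter> ?F = {}" and d2: "(?Z \<union> ?F) \<inter> ?G = {}" by auto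
    have cF: "card ?F = card (tops a r - ?Z)" by (rule card_image) (simp add: inj_on_def)
    have cG: "card ?G = card (tops b r - ?Z)" by (rule card_image) (simp add: inj_on_def)
    have "card (?Z \<union> ?F \<union> ?G) = card (?Z \<union> ?F) + card ?G"
      using card_Un_disjoint[OF finite_UnI[OF fin fF] fG d2] .
    also have "card (?Z \<union> ?F) = card ?Z + card ?F"
      using card_Un_disjoint[OF fin fF d1] by simp
    finally show ?thesis unfolding tops_Node cF cG .
  qed
  also have "\<dots> = nbot r (Node a b)"
    using Node.IH cZ cD[of a] cD[of b] ge[of a] ge[of b]
    by (simp add: split: if_splits)
  finally show ?case .
qed

lemma num_branches_bot: "num_branches t r = nbot r t"
  by (simp add: num_branches_tops card_tops)


definition Bf :: "int fps" where "Bf = gf (\<lambda>t. 1)"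
definition U :: "int fps" where "U = Bf - 1"
definition Rp :: "nat \<Rightarrow> int fps" where "Rp p = gf (\<lambda>t. if reg t = p then 1 else 0)"
definition Lp :: "nat \<Rightarrow> int fps" where "Lp p = gf (\<lambda>t. if reg t \<le> p then 1 else 0)"
definition Bt :: "nat \<Rightarrow> int fps" where "Bt r = gf (\<lambda>t. int (nbot r t))"

lemma Bf_U: "Bf = 1 + U" unfolding U_def by simp

lemma Bf_eq: "Bf = 1 + fps_X * (Bf * Bf)"
proof -
  have "gf (\<lambda>t. 1) = fps_const 1 + fps_X * (gf (\<lambda>t. 1) * gf (\<lambda>t. 1) + gf (\<lambda>t. 0) * gf (\<lambda>t. 0) + gf (\<lambda>t. 0) * gf (\<lambda>t. 0))"
    by (rule gf_node) (auto simp: max_def)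
  then show ?thesis unfolding Bf_def by (simp add: gf_zero)
qed

lemma U_eq: "fps_X * (1 + U)^2 = U"
proof -
  have h: "Bf - 1 = fps_X * (Bf * Bf)" by (metis Bf_eq add_diff_cancel_left')
  have "1 + U = Bf" unfolding U_def by simp
  then show ?thesis using h unfolding U_def by (simp add: power2_eq_square)
qed

lemma U_nth0: "U $ 0 = 0"
  unfolding U_def Bf_def gf_def by (simp add: T0)

lemma one_minus_U: "1 - U \<noteq> 0"
proof
  assume "1 - U = 0"
  then have "(1 - U) $ 0 = 0" by simp
  then show False by (simp add: U_nth0)
qed

lemma cancel_1mU: "(1 - U) * (x - y) = 0 \<Longrightarrow> x = y"
  using one_minus_U by simp

lemma Rp0: "Rp 0 = 1"
proof -
  have "gf (\<lambda>t. if reg t = 0 then 1 else 0) = fps_const 1 + fps_X * (gf (\<lambda>t. 0) * gf (\<lambda>t. 0) + gf (\<lambda>t. 0) * gf (\<lambda>t. 0) + gf (\<lambda>t. 0) * gf (\<lambda>t. 0))"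
    by (rule gf_node) (auto simp: max_def)
  then show ?thesis unfolding Rp_def by (simp add: gf_zero)
qed

lemma RpSuc: "Rp (Suc p) = fps_X * (Rp p * Rp p + Rp (Suc p) * Lp p + Lp p * Rp (Suc p))"
proof -
  have "gf (\<lambda>t. if reg t = Suc p then 1 else 0) = fps_const 0 + fps_X * (
      gf (\<lambda>t. if reg t = p then 1 else 0) * gf (\<lambda>t. if reg t = p then 1 else 0)
    + gf (\<lambda>t. if reg t = Suc p then 1 else 0) * gf (\<lambda>t. if reg t \<le> p then 1 else 0)
    + gf (\<lambda>t. if reg t \<le> p then 1 else 0) * gf (\<lambda>t. if reg t = Suc p then 1 else 0))"
    by (rule gf_node) (auto simp: max_def)
  then show ?thesis unfolding Rp_def Lp_def by simp
qed

lemma Lp0: "Lp 0 = 1"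
  using Rp0 unfolding Rp_def Lp_def by simp

lemma LpSuc: "Lp (Suc p) = Lp p + Rp (Suc p)"
proof -
  have "(\<lambda>t. if reg t \<le> Suc p then 1 else 0) = (\<lambda>t. (if reg t \<le> p then 1 else 0) + (if reg t = Suc p then 1 else (0::int)))"
    by (auto simp: fun_eq_iff)
  then show ?thesis unfolding Rp_def Lp_def by (simp add: gf_add)
qed

lemma Bt0: "Bt 0 = 1 + fps_X * (Bt 0 * (1+U) + (1+U) * Bt 0)"
proof -
  have "gf (\<lambda>t. int (nbot 0 t)) = fps_const 1 + fps_X * (
      gf (\<lambda>t. int (nbot 0 t)) * gf (\<lambda>t. 1) + gf (\<lambda>t. 1) * gf (\<lambda>t. int (nbot 0 t))
    + gf (\<lambda>t. 0) * gf (\<lambda>t. 0))"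
    by (rule gf_node) (auto simp: max_def)
  then show ?thesis unfolding Bt_def Bf_def[symmetric] Bf_U by (simp add: gf_zero)
qed

lemma BtSuc: "Bt (Suc q) = fps_X * (Bt (Suc q) * (1+U) + (1+U) * Bt (Suc q) + Rp q * Rp q)"
proof -
  have "gf (\<lambda>t. int (nbot (Suc q) t)) = fps_const 0 + fps_X * (
      gf (\<lambda>t. int (nbot (Suc q) t)) * gf (\<lambda>t. 1) + gf (\<lambda>t. 1) * gf (\<lambda>t. int (nbot (Suc q) t))
    + gf (\<lambda>t. if reg t = q then 1 else 0) * gf (\<lambda>t. if reg t = q then 1 else 0))"
    by (rule gf_node) (auto simp: max_def)
  then show ?thesis unfolding Bt_def Rp_def Bf_def[symmetric] Bf_U by simp
qed

lemma pow_split: "(x::'a::comm_monoid_mult) ^ (k * s + j) = x ^ j * (x ^ s) ^ k"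
  by (metis power_add power_mult mult.commute)

lemma stepR:
  fixes R L R' X u v :: "'a::comm_ring_1"
  assumes hR: "R*(1-u^2*v^2) = (1-u^2)*v"
  and hL: "L*(1-u^2*v^2) = (1+u)*(1-u*v^2)"
  and hrec: "R' = X*(R*R + R'*L + L*R')"
  and hX: "X*(1+u)^2 = u"
  shows "(1-u) * (R'*(1-u^4*v^4) - (1-u^2)*u*v^2) = 0"
proof -
  have "(1-u) * (R'*(1-u^4*v^4) - (1-u^2)*u*v^2) =
    (1+u)*(1-u^2*v^2)^2*(R' - X*(R*R + R'*L + L*R'))
    + X*(1+u)*(R*(1-u^2*v^2)+(1-u^2)*v)*(R*(1-u^2*v^2) - (1-u^2)*v)
    + ((1+u)*(1-u)^2*v^2 + 2*(1-u^2*v^2)*R'*(1-u*v^2))*(X*(1+u)^2 - u)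
    + 2*X*(1+u)*(1-u^2*v^2)*R'*(L*(1-u^2*v^2) - (1+u)*(1-u*v^2))"
    by (simp add: algebra_simps power2_eq_square power4_eq_xxxx)
  also have "\<dots> = 0" using assms by simp
  finally show ?thesis .
qed

lemma stepL:
  fixes R L R' u v :: "'a::comm_ring_1"
  assumes hL: "L*(1-u^2*v^2) = (1+u)*(1-u*v^2)"
  and hR': "R'*(1-u^4*v^4) = (1-u^2)*u*v^2"
  shows "(L + R')*(1-u^4*v^4) = (1+u)*(1-u^3*v^4)"
proof -
  have "(L + R')*(1-u^4*v^4) = (L*(1-u^2*v^2))*(1+u^2*v^2) + R'*(1-u^4*v^4)"
    by (simp add: algebra_simps power2_eq_square power4_eq_xxxx)
  also have "\<dots> = (1+u)*(1-u*v^2)*(1+u^2*v^2) + (1-u^2)*u*v^2" using assms by simp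
  also have "\<dots> = (1+u)*(1-u^3*v^4)"
    by (simp add: algebra_simps power2_eq_square power4_eq_xxxx power3_eq_cube)
  finally show ?thesis .
qed

lemma RL: "Rp p * (1 - U^(2^Suc p)) = (1 - U^2) * U^(2^p - 1) \<and>
           Lp p * (1 - U^(2^Suc p)) = (1+U) * (1 - U^(2^Suc p - 1))"
proof (induction p)
  case 0
  then show ?case by (simp add: Rp0 Lp0 algebra_simps power2_eq_square)
next
  case (Suc p)
  obtain s where s: "2^p = Suc s" using not0_implies_Suc[of "2^p::nat"] by auto
  let ?v = "U^s"
  have n1: "(2::nat)^Suc p = 2*s+2" and n2: "(2::nat)^Suc p - 1 = 2*s+1"
    and n3: "(2::nat)^Suc (Suc p) = 4*s+4" and n4: "(2::nat)^Suc (Suc p) - 1 = 4*s+3"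
    using s by simp_all
  have e1: "U^(2^Suc p) = U^2 * ?v^2" unfolding n1 by (rule pow_split)
  have e2: "2^p - 1 = s" using s by simp
  have e3: "U^(2^Suc p - 1) = U * ?v^2" unfolding n2 by (simp only: pow_split power_one_right)
  have e4: "U^(2^Suc (Suc p)) = U^4 * ?v^4" unfolding n3 by (rule pow_split)
  have e6: "U^(2^Suc (Suc p) - 1) = U^3 * ?v^4" unfolding n4 by (rule pow_split)
  have hR: "Rp p * (1 - U^2*?v^2) = (1-U^2)*?v" using Suc.IH e1 e2 by simp
  have hL: "Lp p * (1 - U^2*?v^2) = (1+U)*(1 - U*?v^2)" using Suc.IH e1 e3 by simp
  have hR': "Rp (Suc p) * (1 - U^4*?v^4) = (1-U^2)*U*?v^2"
    by (rule cancel_1mU, rule stepR[OF hR hL RpSuc U_eq])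
  have hL': "Lp (Suc p) * (1 - U^4*?v^4) = (1+U)*(1-U^3*?v^4)"
    unfolding LpSuc by (rule stepL[OF hL hR'])
  show ?case using hR' hL' e4 e6 e3 by (simp add: mult.assoc)
qed

lemma Bt_eq: "Bt r * (1 - U^(2^r))^2 = (1 - U^2) * U^(2^r - 1)"
proof (cases r)
  case 0
  let ?b = "Bt 0"
  have "?b * (1 - U)^2 - (1 - U^2) =
     (1-U)*((1+U)*(?b - (1 + fps_X * (?b * (1+U) + (1+U) * ?b))) + 2*?b*(fps_X*(1+U)^2 - U))"
    by (simp add: algebra_simps power2_eq_square)
  also have "\<dots> = 0" using Bt0 U_eq by simp
  finally show ?thesis using 0 by simp
next
  case (Suc q)
  obtain s where s: "2^q = Suc s" using not0_implies_Suc[of "2^q::nat"] by auto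
  let ?v = "U^s" and ?b = "Bt (Suc q)" and ?R = "Rp q" and ?X = "fps_X::int fps"
  have n1: "(2::nat)^Suc q = 2*s+2" and n2: "(2::nat)^Suc q - 1 = 2*s+1"
    using s by simp_all
  have e1: "U^(2^Suc q) = U^2 * ?v^2" unfolding n1 by (rule pow_split)
  have e2: "2^q - 1 = s" using s by simp
  have e3: "U^(2^Suc q - 1) = U * ?v^2" unfolding n2 by (simp only: pow_split power_one_right)
  have hR: "?R * (1 - U^2*?v^2) = (1-U^2)*?v" using RL[of q] e1 e2 by simp
  have "(1-U) * (?b*(1-U^2*?v^2)^2 - (1-U^2)*U*?v^2) =
      (1+U)*(1-U^2*?v^2)^2*(?b - ?X*(?b*(1+U) + (1+U)*?b + ?R*?R))
    + 2*(1-U^2*?v^2)^2*?b*(?X*(1+U)^2 - U)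
    + ?X*(1+U)*(?R*(1-U^2*?v^2)+(1-U^2)*?v)*(?R*(1-U^2*?v^2) - (1-U^2)*?v)
    + (1+U)*(1-U)^2*?v^2*(?X*(1+U)^2 - U)"
    by (simp add: algebra_simps power2_eq_square)
  also have "\<dots> = 0" using BtSuc[of q] U_eq hR by simp
  finally have "?b*(1-U^2*?v^2)^2 = (1-U^2)*U*?v^2" by (rule cancel_1mU)
  then show ?thesis using Suc e1 e3 by (simp add: mult.assoc)
qed


lemma binomi_Suc: "binomi (Suc m) j = binomi m (j - 1) + binomi m j"
proof (cases "j < 0")
  case True then show ?thesis by (simp add: binomi_def)
next
  case False
  show ?thesis
  proof (cases "j = 0")
    case True then show ?thesis by (simp add: binomi_def)
  next
    case False
    with \<open>\<not> j < 0\<close> have h: "nat j = Suc (nat (j - 1))" "\<not> j - 1 < 0" by arith+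
    then show ?thesis using \<open>\<not> j < 0\<close> by (simp add: binomi_def)
  qed
qed

lemma binomi_Suc2: "binomi (Suc (Suc m)) j = binomi m (j - 2) + 2 * binomi m (j - 1) + binomi m j"
proof -
  have "binomi (Suc (Suc m)) j = binomi (Suc m) (j - 1) + binomi (Suc m) j" by (rule binomi_Suc)
  also have "\<dots> = binomi m (j - 1 - 1) + binomi m (j - 1) + (binomi m (j - 1) + binomi m j)"
    by (simp only: binomi_Suc)
  also have "j - 1 - 1 = j - 2" by simp
  finally show ?thesis by simp
qed

fun cc :: "nat \<Rightarrow> nat \<Rightarrow> int" where
  "cc k 0 = (if k = 0 then 1 else 0)"
| "cc k (Suc n) = binomi (Suc (2*n)) (int n + 1 - int k) - binomi (Suc (2*n)) (int n - int k)"

lemma cc_rec: "cc (Suc j) (Suc n) = cc j n + 2 * cc (Suc j) n + cc (Suc (Suc j)) n"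
proof (cases n)
  case 0
  then show ?thesis by (cases j) (simp_all add: binomi_def)
next
  case (Suc m)
  define a where "a = int m - int j"
  let ?B = "binomi (Suc (2*m))"
  have L0: "cc (Suc j) (Suc (Suc m)) = binomi (Suc (Suc (Suc (2*m)))) (a + 1) - binomi (Suc (Suc (Suc (2*m)))) a"
  proof -
    have "Suc (2 * Suc m) = Suc (Suc (Suc (2*m)))" by simp
    moreover have "int (Suc m) + 1 - int (Suc j) = a + 1" "int (Suc m) - int (Suc j) = a"
      by (simp_all add: a_def)
    ultimately show ?thesis by (simp only: cc.simps)
  qed
  have L: "cc (Suc j) (Suc (Suc m)) = ?B (a + 1) + ?B a - ?B (a - 1) - ?B (a - 2)"
  proof -
    have "a + 1 - 2 = a - 1" "a + 1 - 1 = a" by simp_all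
    then show ?thesis unfolding L0 binomi_Suc2 by simp
  qed
  have R1: "cc j (Suc m) = ?B (a + 1) - ?B a"
  proof -
    have "int m + 1 - int j = a + 1" "int m - int j = a" by (simp_all add: a_def)
    then show ?thesis by (simp only: cc.simps)
  qed
  have R2: "cc (Suc j) (Suc m) = ?B a - ?B (a - 1)"
  proof -
    have "int m + 1 - int (Suc j) = a" "int m - int (Suc j) = a - 1" by (simp_all add: a_def)
    then show ?thesis by (simp only: cc.simps)
  qed
  have R3: "cc (Suc (Suc j)) (Suc m) = ?B (a - 1) - ?B (a - 2)"
  proof -
    have "int m + 1 - int (Suc (Suc j)) = a - 1" "int m - int (Suc (Suc j)) = a - 2" by (simp_all add: a_def)
    then show ?thesis by (simp only: cc.simps)
  qed
  show ?thesis unfolding Suc L R1 R2 R3 by simp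
qed

lemma U_pow_Suc: "U^(Suc j) = fps_X * (U^j + U^(Suc j) + U^(Suc j) + U^(Suc (Suc j)))"
proof -
  have "U^(Suc j) = U^j * (fps_X * (1 + U)^2)" using U_eq by (simp add: mult.commute)
  also have "\<dots> = fps_X * (U^j + U^(Suc j) + U^(Suc j) + U^(Suc (Suc j)))"
    by (simp add: algebra_simps power2_eq_square)
  finally show ?thesis .
qed

lemma U_pow_nth: "(U^k) $ n = cc k n"
proof (induction n arbitrary: k)
  case 0
  then show ?case by (simp add: fps_power_zeroth U_nth0)
next
  case (Suc n)
  show ?case
  proof (cases k)
    case 0
    have "Suc (2*n) choose Suc n = Suc (2*n) choose n"
      using binomial_symmetric[of n "Suc (2*n)"] by (simp del: binomial_Suc_Suc)
    moreover have "nat (int n + 1) = Suc n" by simp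
    ultimately show ?thesis using 0 by (simp add: binomi_def del: binomial_Suc_Suc)
  next
    case (Suc j)
    have "(U^k) $ Suc n = (U^j + U^(Suc j) + U^(Suc j) + U^(Suc (Suc j))) $ n"
      unfolding Suc by (subst U_pow_Suc) simp
    also have "\<dots> = cc j n + 2 * cc (Suc j) n + cc (Suc (Suc j)) n"
      by (simp only: fps_add_nth Suc.IH)
    finally show ?thesis using Suc cc_rec by simp
  qed
qed

lemma trunc:
  fixes F G H :: "int fps"
  assumes FG: "F * G = fps_X^m * H" and G0: "G $ 0 = 1" and nm: "n < m"
  shows "F $ n = 0"
  using nm
proof (induction n rule: less_induct)
  case (less n)
  have "(F*G) $ n = 0" using FG less.prems by (simp add: fps_X_power_mult_nth)
  moreover have "(F*G) $ n = F $ n"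
  proof -
    have "(F*G) $ n = (\<Sum>i\<in>insert n {0..<n}. F$i * G$(n - i))"
      unfolding fps_mult_nth by (rule sum.cong) auto
    also have "\<dots> = F$n * G$0 + (\<Sum>i\<in>{0..<n}. F$i * G$(n - i))" by simp
    also have "(\<Sum>i\<in>{0..<n}. F$i * G$(n - i)) = 0"
      using less.IH less.prems by (intro sum.neutral) auto
    finally show ?thesis using G0 by simp
  qed
  ultimately show ?case by simp
qed

lemma geom2:
  fixes w :: "'a::comm_ring_1"
  shows "(1-w)^2 * (\<Sum>i<N. of_nat (Suc i) * w^i) = 1 - of_nat (Suc N) * w^N + of_nat N * w^(Suc N)"
proof (induction N)
  case 0 then show ?case by simp
next
  case (Suc N)
  have "(1-w)^2 * (\<Sum>i<Suc N. of_nat (Suc i) * w^i) =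
        (1-w)^2 * (\<Sum>i<N. of_nat (Suc i) * w^i) + (1-w)^2 * (of_nat (Suc N) * w^N)"
    by (simp add: algebra_simps)
  also have "\<dots> = 1 - of_nat (Suc (Suc N)) * w^(Suc N) + of_nat (Suc N) * w^(Suc (Suc N))"
    unfolding Suc.IH by (simp add: algebra_simps power2_eq_square)
  finally show ?case .
qed

lemma Bt_nth: "Bt r $ n = (\<Sum>i<Suc n. int (Suc i) * (cc (Suc i * 2^r - 1) n - cc (Suc i * 2^r + 1) n))"
proof -
  obtain k where k: "2^r = Suc k" using not0_implies_Suc[of "2^r::nat"] by auto
  define w where "w = U^Suc k"
  define N where "N = Suc n"
  define c where "c = (1 - U^2) * U^k"
  define Q where "Q = (\<Sum>i<N. of_nat (Suc i) * (U^(Suc i * Suc k - 1) - U^(Suc i * Suc k + 1)))"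
  have hterm: "U^(Suc i * Suc k - 1) - U^(Suc i * Suc k + 1) = c * w^i" for i
  proof -
    have "Suc i * Suc k - 1 = k + Suc k * i" "Suc i * Suc k + 1 = (k + Suc k * i) + 2" by simp_all
    then show ?thesis unfolding c_def w_def
      by (simp only: power_add power_mult) (simp add: algebra_simps power2_eq_square)
  qed
  define S where "S = (\<Sum>i<N. of_nat (Suc i) * w^i)"
  have Qc: "Q = c * S"
    unfolding Q_def hterm S_def by (simp add: sum_distrib_left algebra_simps)
  have gS: "(1-w)^2 * S = 1 - of_nat (Suc N) * w^N + of_nat N * w^(Suc N)"
    unfolding S_def by (rule geom2)
  have Bt1: "Bt r * (1 - w)^2 = c"
    using Bt_eq[of r] unfolding k w_def c_def by simp
  have wN: "w^N = fps_X^(Suc k * N) * (1+U)^(2 * (Suc k * N))"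
  proof -
    have "w^N = U^(Suc k * N)" unfolding w_def by (simp only: power_mult)
    also have "\<dots> = (fps_X * (1+U)^2)^(Suc k * N)" using U_eq by simp
    also have "\<dots> = fps_X^(Suc k * N) * (1+U)^(2 * (Suc k * N))"
      by (simp only: power_mult_distrib power_mult)
    finally show ?thesis .
  qed
  have "(Bt r - Q) * (1 - w)^2 = c - c * (1 - of_nat (Suc N) * w^N + of_nat N * w^(Suc N))"
  proof -
    have "(Bt r - Q) * (1 - w)^2 = Bt r * (1 - w)^2 - c * ((1-w)^2 * S)"
      unfolding Qc by (simp add: algebra_simps)
    then show ?thesis unfolding Bt1 gS .
  qed
  also have "\<dots> = w^N * (c * (of_nat (Suc N) - of_nat N * w))"
    by (simp add: algebra_simps)
  also have "\<dots> = fps_X^(Suc k * N) * ((1+U)^(2 * (Suc k * N)) * (c * (of_nat (Suc N) - of_nat N * w)))"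
    unfolding wN by (simp add: algebra_simps)
  finally have eq: "(Bt r - Q) * (1 - w)^2 = fps_X^(Suc k * N) * ((1+U)^(2 * (Suc k * N)) * (c * (of_nat (Suc N) - of_nat N * w)))" .
  have G0: "((1 - w)^2) $ 0 = 1"
    unfolding w_def by (simp add: fps_power_zeroth U_nth0)
  have "n < Suc k * N" unfolding N_def by simp
  from trunc[OF eq G0 this] have "Bt r $ n = Q $ n" by simp
  also have "Q $ n = (\<Sum>i<N. int (Suc i) * (cc (Suc i * Suc k - 1) n - cc (Suc i * Suc k + 1) n))"
    unfolding Q_def fps_sum_nth
  proof (rule sum.cong[OF refl])
    fix i
    show "(of_nat (Suc i) * (U^(Suc i * Suc k - 1) - U^(Suc i * Suc k + 1))) $ n =
          int (Suc i) * (cc (Suc i * Suc k - 1) n - cc (Suc i * Suc k + 1) n)"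
      by (simp only: fps_of_nat[symmetric] fps_mult_left_const_nth fps_sub_nth U_pow_nth)
  qed
  finally show ?thesis unfolding N_def k .
qed


lemma Dk:
  assumes k: "k \<ge> 1"
  shows "cc (k-1) n - cc (k+1) n = binomi (2*n) (int n + 1 - int k) - 2*binomi (2*n) (int n - int k) + binomi (2*n) (int n - 1 - int k)"
proof (cases n)
  case 0
  then show ?thesis using k by (cases "k = 1") (simp_all add: binomi_def)
next
  case (Suc m)
  define a where "a = int m + 1 - int k"
  let ?B = "binomi (Suc (2*m))"
  have c1: "cc (k-1) (Suc m) = ?B (a + 1) - ?B a"
  proof -
    have "int m + 1 - int (k - 1) = a + 1" "int m - int (k - 1) = a" using k by (simp_all add: a_def of_nat_diff)
    then show ?thesis by (simp only: cc.simps)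
  qed
  have c2: "cc (k+1) (Suc m) = ?B (a - 1) - ?B (a - 2)"
  proof -
    have "int m + 1 - int (k + 1) = a - 1" "int m - int (k + 1) = a - 2" by (simp_all add: a_def)
    then show ?thesis by (simp only: cc.simps)
  qed
  have b: "binomi (2 * Suc m) j = ?B (j - 1) + ?B j" for j
  proof -
    have "2 * Suc m = Suc (Suc (2*m))" by simp
    then show ?thesis by (simp only: binomi_Suc)
  qed
  have args: "int (Suc m) + 1 - int k = a + 1" "int (Suc m) - int k = a" "int (Suc m) - 1 - int k = a - 1"
    "a + 1 - 1 = a" "a - 1 - 1 = a - 2"
    by (simp_all add: a_def)
  show ?thesis unfolding Suc c1 c2 b args by simp
qed

lemma card_T_int: "int (card (T n)) = Bf $ n"
  by (simp add: Bf_def gf_def)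

lemma catalan: "int (card (T n)) * (int n + 1) = int ((2*n) choose n)"
proof -
  have cT: "int (card (T n)) = (if n = 0 then 1 else 0) + cc 1 n"
    unfolding card_T_int Bf_U using U_pow_nth[of 1 n] by simp
  show ?thesis
  proof (cases n)
    case 0 then show ?thesis using cT by simp
  next
    case (Suc m)
    show ?thesis
    proof (cases m)
      case 0 then show ?thesis using cT Suc by (simp add: binomi_def)
    next
      case (Suc p)
      let ?N = "Suc (Suc (Suc (2*p)))"
      have A1: "Suc p * (?N choose Suc p) = (p+3) * (?N choose p)"
        using binomial_absorption[of p ?N] binomial_absorb_comp[of ?N p] by simp
      have sym: "?N choose Suc (Suc p) = ?N choose Suc p"
        using binomial_symmetric[of "Suc p" ?N] by (simp del: binomial_Suc_Suc)
      have A2: "(2 * Suc (Suc p)) choose Suc (Suc p) = 2 * (?N choose Suc p)"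
      proof -
        have "2 * Suc (Suc p) = Suc ?N" by simp
        then show ?thesis using sym by (simp only: binomial_Suc_Suc) simp
      qed
      have cc1: "cc 1 n = int (?N choose Suc p) - int (?N choose p)"
      proof -
        have "nat (int (Suc p) + 1 - int (Suc 0)) = Suc p" "nat (int (Suc p) - int (Suc 0)) = p"
          "\<not> int (Suc p) + 1 - int (Suc 0) < 0" "\<not> int (Suc p) - int (Suc 0) < 0" by simp_all
        moreover have "Suc (2 * Suc p) = ?N" by simp
        ultimately show ?thesis unfolding \<open>n = Suc m\<close> \<open>m = Suc p\<close> by (simp add: binomi_def del: of_nat_Suc binomial_Suc_Suc)
      qed
      have A1'': "int (Suc p) * int (?N choose Suc p) = int (p+3) * int (?N choose p)"
        by (metis A1 of_nat_mult)
      have A1': "(1 + int p) * int (?N choose Suc p) = (int p + 3) * int (?N choose p)"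
        using A1'' by simp
      have "int (card (T n)) * (int n + 1) = (int (?N choose Suc p) - int (?N choose p)) * (int p + 3)"
        using cT cc1 \<open>n = Suc m\<close> \<open>m = Suc p\<close> by simp
      also have "\<dots> = 2 * int (?N choose Suc p)"
        using A1' by (simp add: algebra_simps del: binomial_Suc_Suc)
      also have "\<dots> = int ((2*n) choose n)"
        using A2 \<open>n = Suc m\<close> \<open>m = Suc p\<close> by simp
      finally show ?thesis .
    qed
  qed
qed

theorem proposition3:
  fixes n r :: nat
  shows "expected_branches n r =
    real (n + 1) / real ((2 * n) choose n) *
    (\<Sum>l\<in>{1..n+1}. real l *
       real_of_int (binomi (2 * n) (int n + 1 - int l * 2 ^ r)
                    - 2 * binomi (2 * n) (int n - int l * 2 ^ r)
                    + binomi (2 * n) (int n - 1 - int l * 2 ^ r)))"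
proof -
  define Ef where "Ef l = binomi (2 * n) (int n + 1 - int l * 2 ^ r)
                    - 2 * binomi (2 * n) (int n - int l * 2 ^ r)
                    + binomi (2 * n) (int n - 1 - int l * 2 ^ r)" for l
  have sumB: "(\<Sum>t\<in>trees_of_size n. real (num_branches t r)) = real_of_int (Bt r $ n)"
    unfolding trees_of_size_def T_def[symmetric] num_branches_bot Bt_def gf_def by simp
  have BtE: "Bt r $ n = (\<Sum>i<Suc n. int (Suc i) * Ef (Suc i))"
    unfolding Bt_nth
  proof (rule sum.cong[OF refl])
    fix i
    have "0 < Suc i * 2^r" by simp
    then have k: "Suc i * 2^r \<ge> 1" by linarith
    have "int (Suc i * 2^r) = int (Suc i) * 2^r" by (simp add: algebra_simps)
    then show "int (Suc i) * (cc (Suc i * 2^r - 1) n - cc (Suc i * 2^r + 1) n) = int (Suc i) * Ef (Suc i)"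
      unfolding Dk[OF k] Ef_def by simp
  qed
  have sumR: "(\<Sum>l\<in>{1..n+1}. real l * real_of_int (Ef l)) = real_of_int (Bt r $ n)"
  proof -
    have "{1..n+1} = {Suc 0..Suc n}" by simp
    then have "(\<Sum>l\<in>{1..n+1}. real l * real_of_int (Ef l)) = (\<Sum>i<Suc n. real (Suc i) * real_of_int (Ef (Suc i)))"
      by (simp only: sum.atLeast1_atMost_eq)
    also have "\<dots> = real_of_int (Bt r $ n)" unfolding BtE by simp
    finally show ?thesis .
  qed
  have cat: "real (card (T n)) * (real n + 1) = real ((2*n) choose n)"
    using arg_cong[OF catalan[of n], of real_of_int] by simp
  have pos: "real ((2*n) choose n) > 0" by simp
  have cpos: "real (card (T n)) > 0"
  proof (rule ccontr)
    assume "\<not> real (card (T n)) > 0"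
    then have "real (card (T n)) = 0" by simp
    with cat pos show False by simp
  qed
  have "expected_branches n r = real_of_int (Bt r $ n) / real (card (T n))"
    unfolding expected_branches_def sumB by (simp add: trees_of_size_def T_def)
  also have "\<dots> = real (n + 1) / real ((2 * n) choose n) * real_of_int (Bt r $ n)"
  proof -
    have "real (n + 1) / real ((2 * n) choose n) = real (n + 1) / (real (card (T n)) * (real n + 1))"
      using cat by simp
    also have "\<dots> = 1 / real (card (T n))"
    proof -
      have h1: "real (n+1) = real n + 1" and h2: "real n + 1 \<noteq> 0" by simp_all
      show ?thesis unfolding h1 by (rule nonzero_divide_mult_cancel_right[OF h2])
    qed
    finally show ?thesis by simp
  qed
  finally show ?thesis unfolding Ef_def[symmetric] sumR .
qed

end
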